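(* Let $n,d\ge1$, let $\eta^{(i)}_j\ge0$ ($i,j\in[n]$) be coefficients such that the matrix $A$ with $A_{ij}=1$ if $\eta^{(i)}_j>0$ and $0$ otherwise satisfies $A^n>0$ entrywise, and let $\lambda>0$ be a fixed constant depending only on $n,d$. For $\mathbf{x}_1,\ldots,\mathbf{x}_n\in\mathbb{S}^{d-1}$ define $\Phi(\mathbf{x}_1,\ldots,\mathbf{x}_n)=\min_{\mathbf{v}\in\mathbb{S}^{d-1}}\max_{i\in[n]}\angle(\mathbf{v},\mathbf{x}_i)$. There exists $c=c(n,d,\bm{\eta})>0$ such that the following holds: whenever $\mathbf{x}_1,\ldots,\mathbf{x}_n\in\mathbb{S}^{d-1}$ satisfy $\langle\mathbf{w},\mathbf{x}_i\rangle\ge\lambda$ for all $i$ for some unit vector $\mathbf{w}$, and $\mathbf{x}_1',\ldots,\mathbf{x}_n'$ are obtained from them by $n$ iterations of the update $\mathbf{x}^{(i)}\mapsto P_{\mathbb{S}^{d-1}}\big(\mathbf{x}^{(i)}+\sum_{j=1}^n\eta^{(i)}_j\mathbf{x}^{(j)}\big)$ (applied simultaneously to all $i$), then $\Phi(\mathbf{x}_1',\ldots,\mathbf{x}_n')\le(1-c)\,\Phi(\mathbf{x}_1,\ldots,\mathbf{x}_n)$.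
   Context: $\mathbb{S}^{d-1}$ is the unit sphere in $\mathbb{R}^d$, $P_{\mathbb{S}^{d-1}}(\mathbf{w})=\mathbf{w}/\|\mathbf{w}\|_2$, and $\angle(\mathbf{v},\mathbf{x})\in[0,\pi]$ is the angle between vectors. (The update is the party-model update when no agents are split by the random issue, so the subtracted sum is empty.) *)

theory Defs
  imports "HOL-Analysis.Analysis"
begin

definition vec_angle :: "'a::real_inner \<Rightarrow> 'a \<Rightarrow> real" where
  "vec_angle v x = arccos ((v \<bullet> x) / (norm v * norm x))"

definition proj_sphere :: "'a::real_normed_vector \<Rightarrow> 'a" where
  "proj_sphere w = (1 / norm w) *\<^sub>R w"

definition mat_mul :: "nat \<Rightarrow> (nat \<Rightarrow> nat \<Rightarrow> real) \<Rightarrow> (nat \<Rightarrow> nat \<Rightarrow> real) \<Rightarrow> (nat \<Rightarrow> nat \<Rightarrow> real)" where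
  "mat_mul n A B = (\<lambda>i j. \<Sum>k<n. A i k * B k j)"

fun mat_pow :: "nat \<Rightarrow> (nat \<Rightarrow> nat \<Rightarrow> real) \<Rightarrow> nat \<Rightarrow> (nat \<Rightarrow> nat \<Rightarrow> real)" where
  "mat_pow n A 0 = (\<lambda>i j. if i = j then 1 else 0)"
| "mat_pow n A (Suc k) = mat_mul n (mat_pow n A k) A"

definition supp_mat :: "(nat \<Rightarrow> nat \<Rightarrow> real) \<Rightarrow> (nat \<Rightarrow> nat \<Rightarrow> real)" where
  "supp_mat eta = (\<lambda>i j. if eta i j > 0 then 1 else 0)"

definition party_step :: "nat \<Rightarrow> (nat \<Rightarrow> nat \<Rightarrow> real) \<Rightarrow> (nat \<Rightarrow> 'a::real_normed_vector) \<Rightarrow> (nat \<Rightarrow> 'a)" where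
  "party_step n eta x = (\<lambda>i. proj_sphere (x i + (\<Sum>j<n. eta i j *\<^sub>R x j)))"

definition Phi :: "nat \<Rightarrow> (nat \<Rightarrow> 'a::real_inner) \<Rightarrow> real" where
  "Phi n x = Inf {Max ((\<lambda>i. vec_angle v (x i)) ` {..<n}) | v. norm v = 1}"

end

theory Submission
  imports Defs
begin

lemma tan_contr:
  fixes r lam c \<delta> :: real
  assumes r0: "0 \<le> r" and rpi: "r < pi/2" and lc: "lam \<le> cos r" and l0: "0 < lam"
    and c0: "0 < c" and cd: "c \<le> \<delta> * lam^2" and c2: "c \<le> 1/2"
  shows "(1-\<delta>) * tan r \<le> tan ((1-c)*r)"
proof (cases "r = 0")
  case True then show ?thesis by simp
next
  case False
  hence rp: "0 < r" using r0 by simp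
  define t where "t = (1-c)*r"
  have t0: "0 < t" "t < r" using rp c0 c2 unfolding t_def by (auto simp: mult_less_cancel_right)
  have der: "\<And>z. 0 \<le> z \<Longrightarrow> z \<le> r \<Longrightarrow> DERIV tan z :> inverse ((cos z)^2)"
  proof -
    fix z :: real assume "0 \<le> z" "z \<le> r"
    hence "cos z > 0" using rpi by (intro cos_gt_zero_pi) auto
    thus "DERIV tan z :> inverse ((cos z)^2)" by (intro DERIV_tan) simp
  qed
  have cosz: "\<And>z. 0 \<le> z \<Longrightarrow> z \<le> r \<Longrightarrow> lam \<le> cos z \<and> cos z \<le> 1"
  proof -
    fix z :: real assume "0 \<le> z" "z \<le> r"
    hence "cos r \<le> cos z" using rpi by (intro cos_monotone_0_pi_le) auto
    thus "lam \<le> cos z \<and> cos z \<le> 1" using lc by simp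
  qed
  obtain z where z: "t < z" "z < r" "tan r - tan t = (r - t) * inverse ((cos z)^2)"
    using MVT2[OF t0(2), of tan "\<lambda>z. inverse ((cos z)^2)"] der t0 by force
  obtain z' where z': "0 < z'" "z' < r" "tan r - tan 0 = (r - 0) * inverse ((cos z')^2)"
    using MVT2[OF rp, of tan "\<lambda>z. inverse ((cos z)^2)"] der by force
  have "cos z' ^2 \<le> 1" using cosz[of z'] z' l0 by (simp add: abs_square_le_1)
  moreover have "cos z' ^2 > 0" using cosz[of z'] z' l0 by simp
  ultimately have "inverse ((cos z')^2) \<ge> 1" by (simp add: one_le_inverse)
  hence tr: "tan r \<ge> r" using z' rp by (simp add: mult_le_cancel_left1)
  have "lam^2 \<le> cos z ^2" using cosz[of z] z t0 l0 by (intro power_mono) auto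
  hence ic: "inverse ((cos z)^2) \<le> inverse (lam^2)" using l0 by (intro le_imp_inverse_le) auto
  have "tan r - tan t = c * r * inverse ((cos z)^2)" using z(3) unfolding t_def by (simp add: algebra_simps)
  also have "\<dots> \<le> c * r * inverse (lam^2)" using ic c0 rp by (intro mult_left_mono) auto
  also have "\<dots> \<le> c * tan r * inverse (lam^2)" using tr c0 l0 by (intro mult_right_mono mult_left_mono) auto
  also have "\<dots> \<le> \<delta> * tan r"
  proof -
    have "c * inverse (lam^2) \<le> \<delta>" using cd l0 by (simp add: field_simps)
    thus ?thesis using tr rp by (smt (verit) mult.commute mult.left_commute mult_right_mono)
  qed
  finally show ?thesis unfolding t_def by (simp add: algebra_simps)
qed

lemma angle_bound:
  fixes v p :: "'a::real_inner" and t :: real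
  assumes v1: "norm v = 1" and a0: "v \<bullet> p > 0"
    and qb: "norm (p - (v \<bullet> p) *\<^sub>R v) \<le> (v \<bullet> p) * tan t" and t0: "0 \<le> t" and tpi: "t < pi/2"
  shows "arccos (v \<bullet> proj_sphere p) \<le> t"
proof -
  define a where "a = v \<bullet> p"
  define q where "q = p - a *\<^sub>R v"
  have vv: "v \<bullet> v = 1" using v1 by (simp add: dot_square_norm)
  have qv: "q \<bullet> v = 0" unfolding q_def a_def by (simp add: inner_diff_left vv algebra_simps inner_commute[of p v])
  have pq: "p = q + a *\<^sub>R v" unfolding q_def by simp
  have np: "(norm p)^2 = (norm q)^2 + a^2"
    unfolding pq power2_norm_eq_inner by (simp add: inner_add_left inner_add_right qv inner_commute vv power2_eq_square)
  have ap: "a \<le> norm p" using Cauchy_Schwarz_ineq2[of v p] v1 unfolding a_def by simp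
  have a0': "a > 0" using a0 a_def by simp
  hence pn0: "norm p > 0" using ap by linarith
  have ct: "cos t > 0" using t0 tpi by (intro cos_gt_zero_pi) auto
  have tt: "tan t \<ge> 0" using t0 tpi by (rule tan_pos_pi2_le)
  have "(norm q)^2 \<le> (a * tan t)^2" using qb a0' tt unfolding a_def[symmetric] q_def[symmetric]
    by (intro power_mono) auto
  hence "(norm p)^2 \<le> a^2 * (1 + (tan t)^2)" using np by (simp add: algebra_simps power_mult_distrib)
  also have "\<dots> = (a / cos t)^2" proof -
    have "1 + (tan t)^2 = 1 / (cos t)^2" using tan_sec[of t] ct by (simp add: power_one_over divide_inverse power_inverse)
    thus ?thesis by (simp add: power_divide)
  qed
  finally have "(norm p)^2 \<le> (a / cos t)^2" .
  moreover have "0 \<le> a / cos t" using a0' ct by simp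
  ultimately have "norm p \<le> a / cos t" by (rule power2_le_imp_le)
  hence c1: "cos t \<le> a / norm p" using ct pn0 a0' by (simp add: field_simps)
  have c2: "a / norm p \<le> 1" using ap pn0 by simp
  have eq: "v \<bullet> proj_sphere p = a / norm p" unfolding proj_sphere_def a_def by simp
  have "arccos (a / norm p) \<le> arccos (cos t)"
    using c1 c2 ct by (intro arccos_le_arccos) auto
  also have "\<dots> = t" using t0 tpi by (intro arccos_cos) auto
  finally show ?thesis using eq by simp
qed

lemma core:
  fixes v :: "'a::real_inner" and x :: "nat \<Rightarrow> 'a" and W :: "nat \<Rightarrow> real" and m \<delta> :: real
  assumes v1: "norm v = 1" and xn: "\<forall>j<n. norm (x j) = 1"
    and mx: "\<forall>j<n. v \<bullet> x j \<ge> m" and m0: "0 < m"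
    and opt: "\<forall>u. norm u = 1 \<longrightarrow> u \<bullet> v = 0 \<longrightarrow> (\<exists>j<n. u \<bullet> x j \<le> 0)"
    and Wd: "\<forall>j<n. W j \<ge> \<delta> * (\<Sum>j<n. W j)" and W0: "\<forall>j<n. W j \<ge> 0"
    and Wpos: "(\<Sum>j<n. W j) > 0"
  shows "v \<bullet> (\<Sum>j<n. W j *\<^sub>R x j) > 0 \<and>
    norm ((\<Sum>j<n. W j *\<^sub>R x j) - (v \<bullet> (\<Sum>j<n. W j *\<^sub>R x j)) *\<^sub>R v)
      \<le> (v \<bullet> (\<Sum>j<n. W j *\<^sub>R x j)) * ((1-\<delta>) * (sqrt (1 - m^2) / m))"
proof -
  define p where "p = (\<Sum>j<n. W j *\<^sub>R x j)"
  define S where "S = (\<Sum>j<n. W j)"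
  define a where "a = v \<bullet> p"
  define q where "q = p - a *\<^sub>R v"
  define s where "s = sqrt (1 - m^2)"
  have vv: "v \<bullet> v = 1" using v1 by (simp add: dot_square_norm)
  have qv: "q \<bullet> v = 0" unfolding q_def a_def by (simp add: inner_diff_left vv algebra_simps inner_commute[of p v])
  have "a = (\<Sum>j<n. W j * (v \<bullet> x j))" unfolding a_def p_def by (simp add: inner_sum_right)
  also have "\<dots> \<ge> (\<Sum>j<n. W j * m)" using W0 mx by (intro sum_mono mult_left_mono) auto
  finally have aS: "a \<ge> m * S" unfolding S_def by (simp add: sum_distrib_left mult.commute)
  have S0: "S > 0" using Wpos S_def by simp
  have apos: "a > 0" using aS S0 m0 by (smt (verit) mult_pos_pos)
  have n0: "0 < n" using Wpos by (cases n) auto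
  have d1: "\<delta> \<le> 1"
  proof -
    have "W 0 \<le> S" unfolding S_def using W0 n0 by (intro member_le_sum) auto
    moreover have "W 0 \<ge> \<delta> * S" using Wd n0 S_def by auto
    ultimately have "\<delta> * S \<le> 1 * S" by simp
    thus ?thesis using S0 by (simp only: mult_le_cancel_right)
  qed
  have m1: "m \<le> 1" using mx n0 Cauchy_Schwarz_ineq2[of v "x 0"] v1 xn by force
  have s0: "s \<ge> 0" unfolding s_def using m0 m1 by (simp add: power_le_one)
  have bnd: "q \<bullet> x j \<le> norm q * s" if j: "j < n" for j
  proof -
    define c where "c = v \<bullet> x j"
    have c1: "c \<le> 1" using Cauchy_Schwarz_ineq2[of v "x j"] v1 xn j c_def by force
    have cm: "m \<le> c" using mx j c_def by auto
    have "q \<bullet> x j = q \<bullet> (x j - c *\<^sub>R v)" using qv by (simp add: inner_diff_right)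
    also have "\<dots> \<le> norm q * norm (x j - c *\<^sub>R v)" by (rule Cauchy_Schwarz_ineq2[THEN abs_le_D1])
    also have "norm (x j - c *\<^sub>R v) = sqrt (1 - c^2)"
    proof -
      have "(norm (x j - c *\<^sub>R v))^2 = 1 - c^2"
      proof -
        have xx: "x j \<bullet> x j = 1" using xn j by (simp add: dot_square_norm)
        have "(norm (x j - c *\<^sub>R v))^2 = (x j - c *\<^sub>R v) \<bullet> (x j - c *\<^sub>R v)" by (rule power2_norm_eq_inner)
        also have "\<dots> = x j \<bullet> x j - 2 * c * (v \<bullet> x j) + c * c * (v \<bullet> v)"
          by (simp add: inner_diff_left inner_diff_right inner_commute[of v "x j"] algebra_simps)
        also have "\<dots> = 1 - c^2" using xx vv c_def by (simp add: power2_eq_square)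
        finally show ?thesis .
      qed
      thus ?thesis by (metis norm_ge_zero real_sqrt_unique)
    qed
    also have "norm q * sqrt (1 - c^2) \<le> norm q * s" unfolding s_def
      using cm m0 by (intro mult_left_mono real_sqrt_le_mono) (auto intro!: power_mono)
    finally show ?thesis by simp
  qed
  have qb: "norm q \<le> (1-\<delta>) * S * s"
  proof (cases "q = 0")
    case True then show ?thesis using d1 S0 s0 by simp
  next
    case False
    hence nq: "norm q > 0" by simp
    obtain j0 where j0: "j0 < n" "(q /\<^sub>R norm q) \<bullet> x j0 \<le> 0"
      using opt[rule_format, of "q /\<^sub>R norm q"] False qv by auto
    have qj0: "q \<bullet> x j0 \<le> 0" using j0(2) nq by (simp add: mult_le_0_iff)
    have "(norm q)^2 = q \<bullet> p" unfolding power2_norm_eq_inner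
    proof -
      have "p = q + a *\<^sub>R v" unfolding q_def by simp
      hence "q \<bullet> p = q \<bullet> q + a * (q \<bullet> v)" by (simp add: inner_add_right)
      thus "q \<bullet> q = q \<bullet> p" using qv by simp
    qed
    also have "\<dots> = (\<Sum>j<n. W j * (q \<bullet> x j))" unfolding p_def by (simp add: inner_sum_right)
    also have "\<dots> = W j0 * (q \<bullet> x j0) + (\<Sum>j\<in>{..<n}-{j0}. W j * (q \<bullet> x j))"
      using j0 by (subst sum.remove[of _ j0]) auto
    also have "\<dots> \<le> 0 + (\<Sum>j\<in>{..<n}-{j0}. W j * (norm q * s))"
      using W0 j0 qj0 bnd by (intro add_mono sum_mono mult_left_mono) (auto simp: mult_nonneg_nonpos)
    also have "\<dots> = (S - W j0) * (norm q * s)"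
      unfolding S_def using j0 by (simp add: sum_distrib_right[symmetric] sum_diff1 left_diff_distrib)
    also have "\<dots> \<le> (1 - \<delta>) * S * (norm q * s)"
      using Wd j0 S_def nq s0 by (intro mult_right_mono) (auto simp: algebra_simps)
    finally have "norm q * norm q \<le> ((1 - \<delta>) * S * s) * norm q" by (simp add: power2_eq_square algebra_simps)
    thus ?thesis using nq by simp
  qed
  also have "\<dots> \<le> (1-\<delta>) * (a / m) * s"
    using aS m0 d1 s0 by (intro mult_right_mono mult_left_mono) (auto simp: field_simps)
  finally have "norm q \<le> a * ((1-\<delta>) * (s / m))" by (simp add: field_simps)
  thus ?thesis using apos unfolding q_def a_def p_def s_def by simp
qed


lemma sum_delta_vec:
  fixes x :: "nat \<Rightarrow> 'a::real_vector"
  assumes "i < n" shows "(\<Sum>j<n. (if i = j then 1 else 0) *\<^sub>R x j) = x i"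
proof -
  have "(\<Sum>j<n. (if i = j then 1 else (0::real)) *\<^sub>R x j) = (\<Sum>j<n. if i = j then x j else 0)"
    by (rule sum.cong) auto
  thus ?thesis using assms by simp
qed

lemma supp_nonneg: "supp_mat eta i j \<ge> 0" unfolding supp_mat_def by simp

lemma mat_pow_nonneg: "(\<And>i j. A i j \<ge> (0::real)) \<Longrightarrow> mat_pow n A k i j \<ge> 0"
proof (induction k arbitrary: i j)
  case 0 then show ?case by simp
next
  case (Suc k) then show ?case by (simp add: mat_mul_def sum_nonneg)
qed

lemma step:
  fixes x :: "nat \<Rightarrow> 'a::real_inner" and w :: 'a
  assumes eta0: "\<forall>i<n. \<forall>j<n. eta i j \<ge> 0"
    and xC: "\<forall>i<n. norm (x i) = 1 \<and> w \<bullet> x i \<ge> lam" and w1: "norm w = 1" and l0: "lam > 0"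
    and SS: "\<forall>i<n. (\<Sum>j<n. eta i j) \<le> S"
    and em: "\<forall>i<n. \<forall>j<n. eta i j > 0 \<longrightarrow> eta i j \<ge> e"
  shows "(\<forall>i<n. norm (party_step n eta x i) = 1 \<and> w \<bullet> party_step n eta x i \<ge> lam) \<and>
    (\<exists>V. (\<forall>i<n. party_step n eta x i = (\<Sum>j<n. V i j *\<^sub>R x j)) \<and>
         (\<forall>i<n. \<forall>j<n. V i j \<ge> (e / (1 + S)) * supp_mat eta i j))"
proof -
  define y where "y i = x i + (\<Sum>j<n. eta i j *\<^sub>R x j)" for i
  define R where "R i = (\<Sum>j<n. eta i j)" for i
  have R0: "R i \<ge> 0" if "i < n" for i unfolding R_def using eta0 that by (auto intro: sum_nonneg)
  have ny: "norm (y i) \<le> 1 + R i" if i: "i < n" for i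
  proof -
    have "norm (y i) \<le> norm (x i) + norm (\<Sum>j<n. eta i j *\<^sub>R x j)" unfolding y_def by (rule norm_triangle_ineq)
    also have "norm (\<Sum>j<n. eta i j *\<^sub>R x j) \<le> (\<Sum>j<n. norm (eta i j *\<^sub>R x j))" by (rule norm_sum)
    also have "\<dots> = R i" unfolding R_def using xC eta0 i by (intro sum.cong) auto
    finally show ?thesis using xC i by simp
  qed
  have wy: "w \<bullet> y i \<ge> lam * (1 + R i)" if i: "i < n" for i
  proof -
    have "w \<bullet> y i = w \<bullet> x i + (\<Sum>j<n. eta i j * (w \<bullet> x j))" unfolding y_def by (simp add: inner_add_right inner_sum_right)
    also have "\<dots> \<ge> lam + (\<Sum>j<n. eta i j * lam)" using xC eta0 i by (intro add_mono sum_mono mult_left_mono) auto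
    finally show ?thesis unfolding R_def by (simp add: sum_distrib_left algebra_simps)
  qed
  have nyw: "w \<bullet> y i \<le> norm (y i)" for i using Cauchy_Schwarz_ineq2[of w "y i"] w1 by simp
  have ypos: "norm (y i) > 0" if "i < n" for i
    using wy[OF that] nyw[of i] R0[OF that] l0 by (smt (verit) mult_pos_pos)
  have ps: "party_step n eta x i = (1 / norm (y i)) *\<^sub>R y i" for i
    unfolding party_step_def proj_sphere_def y_def by simp
  have part1: "\<forall>i<n. norm (party_step n eta x i) = 1 \<and> w \<bullet> party_step n eta x i \<ge> lam"
  proof (intro allI impI conjI)
    fix i assume i: "i < n"
    show "norm (party_step n eta x i) = 1" unfolding ps using ypos[OF i] by simp
    have "lam * norm (y i) \<le> lam * (1 + R i)" using ny[OF i] l0 by simp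
    also have "\<dots> \<le> w \<bullet> y i" by (rule wy[OF i])
    finally show "w \<bullet> party_step n eta x i \<ge> lam" unfolding ps using ypos[OF i] by (simp add: field_simps)
  qed
  define V where "V i j = (1 / norm (y i)) * ((if i = j then 1 else 0) + eta i j)" for i j
  have rep: "party_step n eta x i = (\<Sum>j<n. V i j *\<^sub>R x j)" if i: "i < n" for i
  proof -
    have "(\<Sum>j<n. V i j *\<^sub>R x j) = (1 / norm (y i)) *\<^sub>R ((\<Sum>j<n. (if i = j then x j else 0)) + (\<Sum>j<n. eta i j *\<^sub>R x j))"
    proof -
      have "V i j *\<^sub>R x j = (1 / norm (y i)) *\<^sub>R ((if i = j then x j else 0) + eta i j *\<^sub>R x j)" for j
        unfolding V_def by (simp add: scaleR_add_right scaleR_add_left add_divide_distrib)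
      hence "(\<Sum>j<n. V i j *\<^sub>R x j) = (\<Sum>j<n. (1 / norm (y i)) *\<^sub>R ((if i = j then x j else 0) + eta i j *\<^sub>R x j))"
        by simp
      also have "\<dots> = (1 / norm (y i)) *\<^sub>R ((\<Sum>j<n. (if i = j then x j else 0)) + (\<Sum>j<n. eta i j *\<^sub>R x j))"
        by (simp only: scaleR_sum_right[symmetric] sum.distrib)
      finally show ?thesis .
    qed
    also have "(\<Sum>j<n. (if i = j then x j else 0)) = x i" using i by simp
    finally show ?thesis unfolding ps y_def by simp
  qed
  have vb: "V i j \<ge> (e / (1 + S)) * supp_mat eta i j" if i: "i < n" and j: "j < n" for i j
  proof (cases "eta i j > 0")
    case True
    have "R i \<le> S" using SS i R_def by auto
    hence "norm (y i) \<le> 1 + S" using ny[OF i] by simp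
    hence "e / (1 + S) \<le> eta i j / norm (y i)" using em i j True ypos[OF i]
      by (smt (verit, best) frac_le)
    also have "\<dots> \<le> V i j" unfolding V_def using ypos[OF i] by (simp add: divide_right_mono)
    finally show ?thesis unfolding supp_mat_def using True by simp
  next
    case False
    thus ?thesis unfolding supp_mat_def V_def using eta0 i j ypos[OF i] by simp
  qed
  show ?thesis using part1 rep vb by blast
qed

lemma iter:
  fixes w :: "'a::real_inner"
  assumes eta0: "\<forall>i<n. \<forall>j<n. eta i j \<ge> 0"
    and w1: "norm w = 1" and l0: "lam > 0"
    and SS: "\<forall>i<n. (\<Sum>j<n. eta i j) \<le> S"
    and em: "\<forall>i<n. \<forall>j<n. eta i j > 0 \<longrightarrow> eta i j \<ge> e"
    and g0: "e / (1 + S) \<ge> 0"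
  shows "\<forall>x :: nat \<Rightarrow> 'a. (\<forall>i<n. norm (x i) = 1 \<and> w \<bullet> x i \<ge> lam) \<longrightarrow>
    (\<forall>i<n. norm ((party_step n eta ^^ k) x i) = 1 \<and> w \<bullet> (party_step n eta ^^ k) x i \<ge> lam) \<and>
    (\<exists>W. (\<forall>i<n. (party_step n eta ^^ k) x i = (\<Sum>j<n. W i j *\<^sub>R x j)) \<and>
         (\<forall>i<n. \<forall>j<n. W i j \<ge> (e / (1 + S))^k * mat_pow n (supp_mat eta) k i j))"
proof (induction k)
  case 0
  show ?case
  proof (intro allI impI)
    fix x :: "nat \<Rightarrow> 'a" assume "\<forall>i<n. norm (x i) = 1 \<and> w \<bullet> x i \<ge> lam"
    moreover have "\<exists>W. (\<forall>i<n. (party_step n eta ^^ 0) x i = (\<Sum>j<n. W i j *\<^sub>R x j)) \<and>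
         (\<forall>i<n. \<forall>j<n. W i j \<ge> (e / (1 + S))^0 * mat_pow n (supp_mat eta) 0 i j)"
      by (rule exI[of _ "\<lambda>i j. if i = j then 1 else 0"]) (simp add: sum_delta_vec)
    ultimately show "(\<forall>i<n. norm ((party_step n eta ^^ 0) x i) = 1 \<and> w \<bullet> (party_step n eta ^^ 0) x i \<ge> lam) \<and>
      (\<exists>W. (\<forall>i<n. (party_step n eta ^^ 0) x i = (\<Sum>j<n. W i j *\<^sub>R x j)) \<and>
         (\<forall>i<n. \<forall>j<n. W i j \<ge> (e / (1 + S))^0 * mat_pow n (supp_mat eta) 0 i j))" by simp
  qed
next
  case (Suc k)
  show ?case
  proof (intro allI impI)
    fix x :: "nat \<Rightarrow> 'a" assume xC: "\<forall>i<n. norm (x i) = 1 \<and> w \<bullet> x i \<ge> lam"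
    define x' where "x' = party_step n eta x"
    have st: "(\<forall>i<n. norm (x' i) = 1 \<and> w \<bullet> x' i \<ge> lam) \<and>
      (\<exists>V. (\<forall>i<n. x' i = (\<Sum>j<n. V i j *\<^sub>R x j)) \<and>
         (\<forall>i<n. \<forall>j<n. V i j \<ge> (e / (1 + S)) * supp_mat eta i j))"
      unfolding x'_def using step[OF eta0 xC w1 l0 SS em] .
    then obtain V where V: "\<forall>i<n. x' i = (\<Sum>j<n. V i j *\<^sub>R x j)"
       "\<forall>i<n. \<forall>j<n. V i j \<ge> (e / (1 + S)) * supp_mat eta i j" by blast
    from Suc.IH[rule_format, of x'] st obtain W' where
      IH1: "\<forall>i<n. norm ((party_step n eta ^^ k) x' i) = 1 \<and> w \<bullet> (party_step n eta ^^ k) x' i \<ge> lam"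
      and W': "\<forall>i<n. (party_step n eta ^^ k) x' i = (\<Sum>l<n. W' i l *\<^sub>R x' l)"
        "\<forall>i<n. \<forall>j<n. W' i j \<ge> (e / (1 + S))^k * mat_pow n (supp_mat eta) k i j" by blast
    have eq: "(party_step n eta ^^ Suc k) x = (party_step n eta ^^ k) x'"
      unfolding x'_def by (simp add: funpow_Suc_right del: funpow.simps)
    define W where "W i j = (\<Sum>l<n. W' i l * V l j)" for i j
    have rep: "(party_step n eta ^^ Suc k) x i = (\<Sum>j<n. W i j *\<^sub>R x j)" if i: "i < n" for i
    proof -
      have "(party_step n eta ^^ Suc k) x i = (\<Sum>l<n. W' i l *\<^sub>R (\<Sum>j<n. V l j *\<^sub>R x j))"
        unfolding eq using W'(1) i V(1) by simp
      also have "\<dots> = (\<Sum>l<n. \<Sum>j<n. (W' i l * V l j) *\<^sub>R x j)" by (simp add: scaleR_sum_right)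
      also have "\<dots> = (\<Sum>j<n. \<Sum>l<n. (W' i l * V l j) *\<^sub>R x j)" by (rule sum.swap)
      also have "\<dots> = (\<Sum>j<n. W i j *\<^sub>R x j)" unfolding W_def by (simp add: scaleR_sum_left)
      finally show ?thesis .
    qed
    have bnd: "W i j \<ge> (e / (1 + S))^Suc k * mat_pow n (supp_mat eta) (Suc k) i j" if i: "i < n" and j: "j < n" for i j
    proof -
      have "(e / (1 + S))^Suc k * mat_pow n (supp_mat eta) (Suc k) i j =
          (\<Sum>l<n. ((e / (1 + S))^k * mat_pow n (supp_mat eta) k i l) * ((e / (1 + S)) * supp_mat eta l j))"
        by (simp add: mat_mul_def sum_distrib_left algebra_simps)
      also have "\<dots> \<le> W i j" unfolding W_def
        using W'(2) V(2) i j g0 mat_pow_nonneg[of "supp_mat eta"] supp_nonneg mult_nonneg_nonneg[OF g0 supp_nonneg]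
        by (intro sum_mono mult_mono) (auto intro: mult_nonneg_nonneg order_trans[OF _ W'(2)[rule_format]])
      finally show ?thesis .
    qed
    show "(\<forall>i<n. norm ((party_step n eta ^^ Suc k) x i) = 1 \<and> w \<bullet> (party_step n eta ^^ Suc k) x i \<ge> lam) \<and>
    (\<exists>W. (\<forall>i<n. (party_step n eta ^^ Suc k) x i = (\<Sum>j<n. W i j *\<^sub>R x j)) \<and>
         (\<forall>i<n. \<forall>j<n. W i j \<ge> (e / (1 + S))^Suc k * mat_pow n (supp_mat eta) (Suc k) i j))"
      using IH1 rep bnd unfolding eq by blast
  qed
qed


lemma cont_Max:
  fixes f :: "nat \<Rightarrow> 'b::topological_space \<Rightarrow> real"
  assumes "finite I" "I \<noteq> {}" "\<And>i. i \<in> I \<Longrightarrow> continuous_on S (f i)"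
  shows "continuous_on S (\<lambda>v. Max ((\<lambda>i. f i v) ` I))"
  using assms
proof (induction I rule: finite_ne_induct)
  case (singleton x) then show ?case by simp
next
  case (insert x F)
  have "continuous_on S (\<lambda>v. max (f x v) (Max ((\<lambda>i. f i v) ` F)))"
    using insert by (intro continuous_on_max) auto
  moreover have "(\<lambda>v. Max ((\<lambda>i. f i v) ` insert x F)) = (\<lambda>v. max (f x v) (Max ((\<lambda>i. f i v) ` F)))"
    using insert by (simp add: Max_insert)
  ultimately show ?case by (metis (no_types, lifting))
qed

lemma opt_lemma:
  fixes v :: "'a::real_inner" and x :: "nat \<Rightarrow> 'a"
  assumes v1: "norm v = 1" and n0: "0 < n"
    and mx: "\<forall>j<n. v \<bullet> x j \<ge> m" and m0: "0 < m" and m1: "m \<le> 1"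
    and minim: "\<forall>v'. norm v' = 1 \<longrightarrow> (\<exists>j<n. v' \<bullet> x j \<le> m)"
  shows "\<forall>u. norm u = 1 \<longrightarrow> u \<bullet> v = 0 \<longrightarrow> (\<exists>j<n. u \<bullet> x j \<le> 0)"
proof (intro allI impI, rule ccontr)
  fix u :: 'a assume u1: "norm u = 1" and uv: "u \<bullet> v = 0" and nj: "\<not> (\<exists>j<n. u \<bullet> x j \<le> 0)"
  hence pos: "\<forall>j<n. u \<bullet> x j > 0" by auto
  define \<alpha> where "\<alpha> = Min ((\<lambda>j. u \<bullet> x j) ` {..<n})"
  have al0: "\<alpha> > 0" unfolding \<alpha>_def using pos n0 by (subst Min_gr_iff) auto
  have alj: "\<alpha> \<le> u \<bullet> x j" if "j < n" for j unfolding \<alpha>_def using that by (intro Min_le) auto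
  define z where "z = v + \<alpha> *\<^sub>R u"
  define s where "s = sqrt (1 + \<alpha>^2)"
  have vv: "v \<bullet> v = 1" using v1 by (simp add: dot_square_norm)
  have uu: "u \<bullet> u = 1" using u1 by (simp add: dot_square_norm)
  have "(norm z)^2 = 1 + \<alpha>^2" unfolding power2_norm_eq_inner z_def
    using vv uu uv by (simp add: inner_add_left inner_add_right inner_commute[of v u] power2_eq_square)
  hence nz: "norm z = s" unfolding s_def by (metis norm_ge_zero real_sqrt_unique)
  have s1: "s \<ge> 1" unfolding s_def by simp
  have s2: "s \<le> 1 + \<alpha>^2 / 2"
    unfolding s_def by (rule real_sqrt_le_iff[THEN iffD2, of _ "(1 + \<alpha>^2/2)^2", simplified]) (use al0 in \<open>auto simp: power2_eq_square algebra_simps\<close>)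
  define v' where "v' = (1 / s) *\<^sub>R z"
  have nv': "norm v' = 1" unfolding v'_def using nz s1 by simp
  have "v' \<bullet> x j > m" if j: "j < n" for j
  proof -
    have "v' \<bullet> x j = (v \<bullet> x j + \<alpha> * (u \<bullet> x j)) / s" unfolding v'_def z_def by (simp add: inner_add_left)
    moreover have "v \<bullet> x j + \<alpha> * (u \<bullet> x j) \<ge> m + \<alpha>^2"
      using mx j alj[OF j] al0 by (simp add: power2_eq_square add_mono mult_left_mono)
    moreover have "m * s < m + \<alpha>^2"
    proof -
      have "m * s \<le> m * (1 + \<alpha>^2 / 2)" using s2 m0 by simp
      also have "\<dots> < m + \<alpha>^2" using m1 al0 m0 by (simp add: algebra_simps)
      finally show ?thesis .
    qed
    ultimately have "s * m < s * (v' \<bullet> x j)"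
    proof -
      assume e1: "v' \<bullet> x j = (v \<bullet> x j + \<alpha> * (u \<bullet> x j)) / s"
        and e2: "v \<bullet> x j + \<alpha> * (u \<bullet> x j) \<ge> m + \<alpha>^2" and e3: "m * s < m + \<alpha>^2"
      have "s * (v' \<bullet> x j) = v \<bullet> x j + \<alpha> * (u \<bullet> x j)" unfolding e1 using s1 by simp
      thus ?thesis using e2 e3 by (simp add: mult.commute)
    qed
    thus ?thesis using s1 by simp
  qed
  thus False using minim nv' by force
qed

theorem lemma3p13:
  fixes n :: nat and eta :: "nat \<Rightarrow> nat \<Rightarrow> real" and lam :: real
  assumes "n \<ge> 1"
    and "\<And>i j. i < n \<Longrightarrow> j < n \<Longrightarrow> eta i j \<ge> 0"
    and "\<And>i j. i < n \<Longrightarrow> j < n \<Longrightarrow> mat_pow n (supp_mat eta) n i j > 0"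
    and "lam > 0"
  shows "\<exists>c>0. \<forall>(x :: nat \<Rightarrow> 'a::euclidean_space) w.
           (\<forall>i<n. norm (x i) = 1) \<longrightarrow> norm w = 1 \<longrightarrow> (\<forall>i<n. w \<bullet> x i \<ge> lam) \<longrightarrow>
           Phi n ((party_step n eta ^^ n) x) \<le> (1 - c) * Phi n x"
proof -
  note n1 = assms(1) and eta0' = assms(2) and An = assms(3) and l0 = assms(4)
  have n0: "0 < n" using n1 by simp
  have eta0: "\<forall>i<n. \<forall>j<n. eta i j \<ge> 0" using eta0' by auto
  define S where "S = (\<Sum>i<n. \<Sum>j<n. eta i j)"
  have SS: "\<forall>i<n. (\<Sum>j<n. eta i j) \<le> S"
  proof (intro allI impI)
    fix i assume i: "i < n"
    show "(\<Sum>j<n. eta i j) \<le> S" unfolding S_def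
      using i eta0 by (intro member_le_sum[of i "{..<n}" "\<lambda>i. \<Sum>j<n. eta i j"]) (auto intro: sum_nonneg)
  qed
  have S0: "S \<ge> 0" unfolding S_def using eta0 by (auto intro!: sum_nonneg)
  define E where "E = insert 1 {eta i j | i j. i < n \<and> j < n \<and> eta i j > 0}"
  have finE: "finite E"
  proof -
    have "{eta i j | i j. i < n \<and> j < n \<and> eta i j > 0} \<subseteq> (\<lambda>(i, j). eta i j) ` ({..<n} \<times> {..<n})" by auto
    hence "finite {eta i j | i j. i < n \<and> j < n \<and> eta i j > 0}" by (rule finite_subset) auto
    thus ?thesis unfolding E_def by simp
  qed
  define e where "e = Min E"
  have e0: "e > 0" unfolding e_def using finE by (subst Min_gr_iff) (auto simp: E_def)
  have em: "\<forall>i<n. \<forall>j<n. eta i j > 0 \<longrightarrow> eta i j \<ge> e" unfolding e_def using finE by (auto intro!: Min_le simp: E_def)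
  define \<gamma> where "\<gamma> = e / (1 + S)"
  have g0: "\<gamma> > 0" unfolding \<gamma>_def using e0 S0 by simp
  define F where "F = {mat_pow n (supp_mat eta) n i j | i j. i < n \<and> j < n}"
  have finF: "finite F"
  proof -
    have "F \<subseteq> (\<lambda>(i, j). mat_pow n (supp_mat eta) n i j) ` ({..<n} \<times> {..<n})" unfolding F_def by auto
    thus ?thesis by (rule finite_subset) auto
  qed
  have Fne: "F \<noteq> {}" unfolding F_def using n0 by auto
  define a0 where "a0 = Min F"
  have a00: "a0 > 0" unfolding a0_def using finF Fne An by (subst Min_gr_iff) (auto simp: F_def)
  have a0le: "a0 \<le> mat_pow n (supp_mat eta) n i j" if "i < n" "j < n" for i j
    unfolding a0_def using finF that by (intro Min_le) (auto simp: F_def)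
  define \<delta>0 where "\<delta>0 = \<gamma>^n * a0"
  have d00: "\<delta>0 > 0" unfolding \<delta>0_def using g0 a00 by simp
  define \<delta> where "\<delta> = \<delta>0 * lam"
  define c where "c = min (1/2) (\<delta> * lam^2)"
  have c0: "c > 0" unfolding c_def \<delta>_def using d00 l0 by simp
  have c2: "c \<le> 1/2" "c \<le> \<delta> * lam^2" unfolding c_def by auto
  show ?thesis
  proof (rule exI[of _ c], intro conjI c0 allI impI)
    fix x :: "nat \<Rightarrow> 'a" and w :: 'a
    assume xn: "\<forall>i<n. norm (x i) = 1" and w1: "norm w = 1" and wx: "\<forall>i<n. lam \<le> w \<bullet> x i"
    have xC: "\<forall>i<n. norm (x i) = 1 \<and> w \<bullet> x i \<ge> lam" using xn wx by auto
    have l1: "lam \<le> 1" using wx n0 Cauchy_Schwarz_ineq2[of w "x 0"] w1 xn by force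
    define x' where "x' = (party_step n eta ^^ n) x"
    obtain W where x'C: "\<forall>i<n. norm (x' i) = 1 \<and> w \<bullet> x' i \<ge> lam"
      and Wrep: "\<forall>i<n. x' i = (\<Sum>j<n. W i j *\<^sub>R x j)"
      and Wb: "\<forall>i<n. \<forall>j<n. W i j \<ge> \<gamma>^n * mat_pow n (supp_mat eta) n i j"
    proof -
      have g0': "e / (1 + S) \<ge> 0" using g0 \<gamma>_def by simp
      note H = mp[OF spec[OF iter[OF eta0 w1 l0 SS em g0', of n], of x] xC]
      show ?thesis using H that unfolding x'_def \<gamma>_def by blast
    qed
    have Wd0: "W i j \<ge> \<delta>0" if "i < n" "j < n" for i j
    proof -
      have "\<delta>0 \<le> \<gamma>^n * mat_pow n (supp_mat eta) n i j" unfolding \<delta>0_def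
        using a0le[OF that] g0 by (intro mult_left_mono) auto
      thus ?thesis using Wb that by force
    qed
    have W0: "W i j \<ge> 0" if "i < n" "j < n" for i j using Wd0[OF that] d00 by simp
    have Wsum: "lam * (\<Sum>j<n. W i j) \<le> 1" if i: "i < n" for i
    proof -
      have "w \<bullet> x' i = (\<Sum>j<n. W i j * (w \<bullet> x j))" using Wrep i by (simp add: inner_sum_right)
      also have "\<dots> \<ge> (\<Sum>j<n. W i j * lam)" using W0 i wx by (intro sum_mono mult_left_mono) auto
      finally have "lam * (\<Sum>j<n. W i j) \<le> w \<bullet> x' i" by (simp add: sum_distrib_left mult.commute)
      also have "\<dots> \<le> 1" using Cauchy_Schwarz_ineq2[of w "x' i"] w1 x'C i by force
      finally show ?thesis .
    qed
    have Wd: "\<forall>j<n. W i j \<ge> \<delta> * (\<Sum>j<n. W i j)" if i: "i < n" for i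
    proof (intro allI impI)
      fix j assume j: "j < n"
      have "\<delta> * (\<Sum>j<n. W i j) = \<delta>0 * (lam * (\<Sum>j<n. W i j))" unfolding \<delta>_def by simp
      also have "\<dots> \<le> \<delta>0" using Wsum[OF i] d00 by (simp add: mult_left_le)
      also have "\<dots> \<le> W i j" by (rule Wd0[OF i j])
      finally show "W i j \<ge> \<delta> * (\<Sum>j<n. W i j)" .
    qed
    have Wpos: "(\<Sum>j<n. W i j) > 0" if i: "i < n" for i
    proof -
      have "W i 0 \<le> (\<Sum>j<n. W i j)" using W0 i n0 by (intro member_le_sum) auto
      thus ?thesis using Wd0[OF i n0] d00 by simp
    qed
    define G where "G y v = Max ((\<lambda>i. vec_angle v (y i)) ` {..<n})" for y :: "nat \<Rightarrow> 'a" and v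
    have va: "vec_angle v y = arccos (v \<bullet> y)" if "norm v = 1" "norm y = 1" for v y :: 'a
      unfolding vec_angle_def using that by simp
    have ip1: "-1 \<le> v \<bullet> y \<and> v \<bullet> y \<le> 1" if "norm v = 1" "norm y = 1" for v y :: 'a
      using Cauchy_Schwarz_ineq2[of v y] that by (simp add: abs_le_iff)
    have Gnn: "G y v \<ge> 0" if "norm v = 1" "\<forall>i<n. norm (y i) = 1" for y v
    proof -
      have "vec_angle v (y 0) \<le> G y v" unfolding G_def using n0 by (intro Max_ge) auto
      moreover have "vec_angle v (y 0) \<ge> 0" using va[of v "y 0"] ip1[of v "y 0"] that n0 arccos_lbound by simp
      ultimately show ?thesis by simp
    qed
    have Phi_eq: "Phi n y = Inf (G y ` sphere 0 1)" for y
      unfolding Phi_def G_def by (rule arg_cong[where f = Inf]) auto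
    have contG: "continuous_on (sphere 0 1) (G x)"
    proof -
      have "continuous_on (sphere 0 1) (\<lambda>v. Max ((\<lambda>i. arccos (v \<bullet> x i)) ` {..<n}))"
      proof (rule cont_Max)
        fix i assume "i \<in> {..<n}"
        hence "\<And>v. v \<in> sphere 0 1 \<Longrightarrow> v \<bullet> x i \<in> {-1..1}" using ip1 xn by auto
        thus "continuous_on (sphere 0 1) (\<lambda>v. arccos (v \<bullet> x i))"
          by (intro continuous_on_compose2[OF continuous_on_arccos'] continuous_intros) auto
      qed (use n0 in auto)
      moreover have "\<And>v. v \<in> sphere 0 1 \<Longrightarrow> G x v = Max ((\<lambda>i. arccos (v \<bullet> x i)) ` {..<n})"
        unfolding G_def using va xn by (intro arg_cong[where f = Max] image_cong) auto
      ultimately show ?thesis using continuous_on_cong by (metis (no_types, lifting))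
    qed
    obtain v0 where v0s: "v0 \<in> sphere (0::'a) 1" and v0min: "\<forall>v\<in>sphere 0 1. G x v0 \<le> G x v"
    proof -
      have "sphere (0::'a) 1 \<noteq> {}" using w1 by auto
      thus ?thesis using continuous_attains_inf[OF compact_sphere _ contG] that by blast
    qed
    have v1: "norm v0 = 1" using v0s by simp
    define r where "r = G x v0"
    have Phix: "Phi n x = r" unfolding Phi_eq r_def
      using v0s v0min by (intro cInf_eq_minimum) auto
    have r0: "r \<ge> 0" unfolding r_def using Gnn v1 xn by simp
    have rl: "r \<le> arccos lam"
    proof -
      have "r \<le> G x w" unfolding r_def using v0min w1 by simp
      also have "G x w \<le> arccos lam" unfolding G_def
      proof (subst Max_le_iff, (use n0 in auto)[2], safe)
        fix i assume i: "i < n"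
        show "vec_angle w (x i) \<le> arccos lam" using va[of w "x i"] w1 xn i ip1[of w "x i"] wx l0
          by (simp add: arccos_le_arccos)
      qed
      finally show ?thesis .
    qed
    have arl: "arccos lam < pi/2" using arccos_less_arccos[of 0 lam] l0 l1 by simp
    have rpi: "r < pi/2" using rl arl by simp
    define m where "m = cos r"
    have mlam: "lam \<le> m"
    proof -
      have "cos (arccos lam) \<le> cos r" using r0 rl arl by (intro cos_monotone_0_pi_le) auto
      thus ?thesis using l0 l1 m_def by simp
    qed
    have m0: "m > 0" using mlam l0 by simp
    have m1: "m \<le> 1" unfolding m_def by simp
    have mx: "\<forall>j<n. v0 \<bullet> x j \<ge> m"
    proof (intro allI impI)
      fix j assume j: "j < n"
      have "arccos (v0 \<bullet> x j) \<le> r" unfolding r_def G_def using va[of v0 "x j"] v1 xn j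
        by (metis (no_types, lifting) Max_ge finite_imageI finite_lessThan image_eqI lessThan_iff)
      hence "cos r \<le> cos (arccos (v0 \<bullet> x j))"
        using ip1[of v0 "x j"] v1 xn j arccos_lbound rpi pi_gt3 by (intro cos_monotone_0_pi_le) (auto simp: arccos_lbound)
      thus "v0 \<bullet> x j \<ge> m" using ip1[of v0 "x j"] v1 xn j m_def by simp
    qed
    have rm: "r = arccos m" unfolding m_def using r0 rpi by (simp add: arccos_cos)
    have minim: "\<forall>v'. norm v' = 1 \<longrightarrow> (\<exists>j<n. v' \<bullet> x j \<le> m)"
    proof (intro allI impI, rule ccontr)
      fix v' :: 'a assume nv: "norm v' = 1" and "\<not> (\<exists>j<n. v' \<bullet> x j \<le> m)"
      hence gt: "\<forall>j<n. v' \<bullet> x j > m" by auto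
      have "G x v' < r" unfolding G_def
      proof (subst Max_less_iff, (use n0 in auto)[2], safe)
        fix j assume j: "j < n"
        have "arccos (v' \<bullet> x j) < arccos m" using gt j ip1[of v' "x j"] nv xn m0
          by (intro arccos_less_arccos) auto
        thus "vec_angle v' (x j) < r" using va[of v' "x j"] nv xn j rm by simp
      qed
      thus False using v0min nv r_def by force
    qed
    have opt: "\<forall>u. norm u = 1 \<longrightarrow> u \<bullet> v0 = 0 \<longrightarrow> (\<exists>j<n. u \<bullet> x j \<le> 0)"
      by (rule opt_lemma[OF v1 n0 mx m0 m1 minim])
    have tanr: "tan r = sqrt (1 - m^2) / m"
      unfolding tan_def using rm m0 m1 by (simp add: sin_arccos m_def[symmetric])
    define t where "t = (1 - c) * r"
    have tc: "(1-\<delta>) * tan r \<le> tan t" unfolding t_def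
      by (rule tan_contr[OF r0 rpi _ l0 c0 c2(2) c2(1)]) (use mlam m_def in simp)
    have t0: "0 \<le> t" "t < pi/2"
    proof -
      have "1 - c \<ge> 0" using c2 by simp
      thus "0 \<le> t" unfolding t_def using r0 by simp
      have "t = r - c * r" unfolding t_def by (simp add: algebra_simps)
      moreover have "c * r \<ge> 0" using c0 r0 by simp
      ultimately show "t < pi/2" using rpi by linarith
    qed
    have angle_i: "vec_angle v0 (x' i) \<le> t" if i: "i < n" for i
    proof -
      define p where "p = (\<Sum>j<n. W i j *\<^sub>R x j)"
      have cr: "v0 \<bullet> p > 0 \<and> norm (p - (v0 \<bullet> p) *\<^sub>R v0) \<le> (v0 \<bullet> p) * ((1-\<delta>) * (sqrt (1 - m^2) / m))"
        unfolding p_def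
        by (rule core[OF v1 xn mx m0 opt Wd[OF i]]) (use W0 i Wpos[OF i] in auto)
      have "norm (p - (v0 \<bullet> p) *\<^sub>R v0) \<le> (v0 \<bullet> p) * tan t"
        using cr tc tanr by (smt (verit) mult_left_mono)
      hence "arccos (v0 \<bullet> proj_sphere p) \<le> t" using angle_bound[OF v1 _ _ t0] cr by blast
      moreover have "proj_sphere p = x' i" using Wrep x'C i unfolding p_def proj_sphere_def by simp
      ultimately show ?thesis using va[of v0 "x' i"] v1 x'C i by simp
    qed
    have "Phi n x' \<le> G x' v0" unfolding Phi_eq
    proof (rule cInf_lower)
      show "G x' v0 \<in> G x' ` sphere 0 1" using v0s by simp
      show "bdd_below (G x' ` sphere 0 1)"
        by (rule bdd_belowI[of _ 0]) (use Gnn x'C in auto)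
    qed
    also have "G x' v0 \<le> t" unfolding G_def
      by (subst Max_le_iff) (use n0 angle_i in auto)
    finally show "Phi n ((party_step n eta ^^ n) x) \<le> (1 - c) * Phi n x"
      unfolding x'_def[symmetric] Phix t_def .
  qed
qed

end
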